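(* Let $G$ be a connected graph, let $u\in V(G)$ be any vertex, and let $G'$ be obtained from $G$ by adding a new vertex $x$ and the edge $ux$. If $G$ forces an all-ones representation then $\operatorname{cdim}(G')=\operatorname{cdim}(G)+1$; otherwise $\operatorname{cdim}(G')=\operatorname{cdim}(G)$. In particular, the value of $\operatorname{cdim}(G')$ does not depend on the choice of $u$.
   Context: All graphs are finite, simple, undirected and nonempty. For distinct vertices $v,w$ of a graph $G$, $\kappa_G(v,w)$ is the maximum number of internally vertex-disjoint $v$–$w$ paths in $G$ (an edge $vw$ counts as one such path); $\kappa_G(v,v)=\infty$. For an ordered vertex set $W=(w_1,\ldots,w_k)$, $r_G(v,W)=[\kappa_G(v,w_1),\ldots,\kappa_G(v,w_k)]$. $W$ is resolving for $G$ if $r_G(v_1,W)=r_G(v_2,W)$ implies $v_1=v_2$. A (connectivity) basis is a resolving set of minimum cardinality, and $\operatorname{cdim}(G)$ is its cardinality. A graph $G$ forces an all-ones representation if for every basis $B$ of $G$ there is a vertex $v\in V(G)$ with $r_G(v,B)=[1,\ldots,1]$ (all entries equal to $1$); the one-vertex graph $K_1$ (only basis $\emptyset$, empty representation vector) counts as forcing an all-ones representation. *)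

theory Defs
  imports "HOL-Library.Extended_Nat"
begin

definition graph :: "'a set \<Rightarrow> 'a set set \<Rightarrow> bool" where
  "graph V E \<longleftrightarrow> finite V \<and> V \<noteq> {} \<and>
     E \<subseteq> {{a, b} | a b. a \<in> V \<and> b \<in> V \<and> a \<noteq> b}"

definition is_path :: "'a set \<Rightarrow> 'a set set \<Rightarrow> 'a \<Rightarrow> 'a \<Rightarrow> 'a list \<Rightarrow> bool" where
  "is_path V E v w p \<longleftrightarrow> p \<noteq> [] \<and> hd p = v \<and> last p = w \<and> distinct p \<and> set p \<subseteq> V \<and>
     (\<forall>i. Suc i < length p \<longrightarrow> {p ! i, p ! Suc i} \<in> E)"

definition connected :: "'a set \<Rightarrow> 'a set set \<Rightarrow> bool" where
  "connected V E \<longleftrightarrow> (\<forall>v\<in>V. \<forall>w\<in>V. \<exists>p. is_path V E v w p)"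

definition int_disjoint_paths :: "'a set \<Rightarrow> 'a set set \<Rightarrow> 'a \<Rightarrow> 'a \<Rightarrow> 'a list set \<Rightarrow> bool" where
  "int_disjoint_paths V E v w P \<longleftrightarrow> (\<forall>p\<in>P. is_path V E v w p) \<and>
     (\<forall>p\<in>P. \<forall>q\<in>P. p \<noteq> q \<longrightarrow> set p \<inter> set q \<subseteq> {v, w})"

definition kappa :: "'a set \<Rightarrow> 'a set set \<Rightarrow> 'a \<Rightarrow> 'a \<Rightarrow> enat" where
  "kappa V E v w = (if v = w then \<infinity>
     else enat (Max {card P | P. int_disjoint_paths V E v w P}))"

definition rep :: "'a set \<Rightarrow> 'a set set \<Rightarrow> 'a \<Rightarrow> 'a list \<Rightarrow> enat list" where
  "rep V E v W = map (kappa V E v) W"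

definition resolving :: "'a set \<Rightarrow> 'a set set \<Rightarrow> 'a list \<Rightarrow> bool" where
  "resolving V E W \<longleftrightarrow> distinct W \<and> set W \<subseteq> V \<and>
     (\<forall>v1\<in>V. \<forall>v2\<in>V. rep V E v1 W = rep V E v2 W \<longrightarrow> v1 = v2)"

definition cdim :: "'a set \<Rightarrow> 'a set set \<Rightarrow> nat" where
  "cdim V E = (LEAST k. \<exists>W. resolving V E W \<and> length W = k)"

definition basis :: "'a set \<Rightarrow> 'a set set \<Rightarrow> 'a list \<Rightarrow> bool" where
  "basis V E B \<longleftrightarrow> resolving V E B \<and> length B = cdim V E"

definition forces_all_ones :: "'a set \<Rightarrow> 'a set set \<Rightarrow> bool" where
  "forces_all_ones V E \<longleftrightarrow>
     (\<forall>B. basis V E B \<longrightarrow> (\<exists>v\<in>V. rep V E v B = replicate (length B) 1))"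

end

theory Submission
  imports Defs
begin

lemma is_path_rev:
  assumes "is_path V E v w p" shows "is_path V E w v (rev p)"
proof -
  have e: "\<forall>i. Suc i < length p \<longrightarrow> {p ! i, p ! Suc i} \<in> E" and ne: "p \<noteq> []"
    using assms unfolding is_path_def by auto
  have "{rev p ! i, rev p ! Suc i} \<in> E" if "Suc i < length (rev p)" for i
  proof -
    define j where "j = length p - Suc (Suc i)"
    have j1: "Suc j = length p - Suc i" "Suc j < length p" using that j_def by auto
    have A: "rev p ! i = p ! Suc j" using that j1 by (simp add: rev_nth)
    have B: "rev p ! Suc i = p ! j" using that j_def by (simp add: rev_nth)
    have C: "{p ! j, p ! Suc j} \<in> E" using e j1(2) by blast
    have D: "{p ! Suc j, p ! j} = {p ! j, p ! Suc j}" by blast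
    show ?thesis unfolding A B D by (rule C)
  qed
  moreover have "rev p \<noteq> []" "hd (rev p) = w" "last (rev p) = v" "distinct (rev p)" "set (rev p) \<subseteq> V"
    using assms unfolding is_path_def by (simp_all add: hd_rev last_rev)
  ultimately show ?thesis unfolding is_path_def by blast
qed

lemma idp_rev:
  assumes "int_disjoint_paths V E v w P" shows "int_disjoint_paths V E w v (rev ` P)"
proof -
  have a: "\<forall>p\<in>P. is_path V E v w p" "\<forall>p\<in>P. \<forall>q\<in>P. p \<noteq> q \<longrightarrow> set p \<inter> set q \<subseteq> {v, w}"
    using assms unfolding int_disjoint_paths_def by auto
  have "\<forall>p\<in>rev ` P. is_path V E w v p"
  proof
    fix p assume "p \<in> rev ` P"
    then obtain p0 where p0: "p = rev p0" "p0 \<in> P" by blast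
    show "is_path V E w v p" unfolding p0(1) using a(1) p0(2) by (intro is_path_rev) blast
  qed
  moreover have "\<forall>p\<in>rev ` P. \<forall>q\<in>rev ` P. p \<noteq> q \<longrightarrow> set p \<inter> set q \<subseteq> {w, v}"
  proof (intro ballI impI)
    fix p q assume pq: "p \<in> rev ` P" "q \<in> rev ` P" "p \<noteq> q"
    obtain p0 where p0: "p = rev p0" "p0 \<in> P" using pq(1) by blast
    obtain q0 where q0: "q = rev q0" "q0 \<in> P" using pq(2) by blast
    have "p0 \<noteq> q0" using pq(3) p0 q0 by blast
    then have "set p0 \<inter> set q0 \<subseteq> {v, w}" using a(2) p0 q0 by blast
    then show "set p \<inter> set q \<subseteq> {w, v}" using p0 q0 by auto
  qed
  ultimately show ?thesis unfolding int_disjoint_paths_def by blast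
qed

lemma kappa_sub:
  "{card P | P. int_disjoint_paths V E v w P} \<subseteq> {card P | P. int_disjoint_paths V E w v P}"
proof
  fix n assume "n \<in> {card P | P. int_disjoint_paths V E v w P}"
  then obtain P where "n = card P" "int_disjoint_paths V E v w P" by auto
  moreover have "card (rev ` P) = card P" by (rule card_image[OF inj_on_rev])
  moreover have "int_disjoint_paths V E w v (rev ` P)" using idp_rev calculation(2) .
  ultimately have "n = card (rev ` P) \<and> int_disjoint_paths V E w v (rev ` P)" by simp
  then show "n \<in> {card P | P. int_disjoint_paths V E w v P}" by blast
qed

lemma kappa_sym: "kappa V E v w = kappa V E w v"
proof -
  have "{card P | P. int_disjoint_paths V E v w P} = {card P | P. int_disjoint_paths V E w v P}"
    by (rule equalityI[OF kappa_sub kappa_sub])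
  then show ?thesis unfolding kappa_def by simp
qed

lemma ex_resolving:
  assumes "finite V" shows "\<exists>W. resolving V E W"
proof -
  obtain W where W: "set W = V" "distinct W" using finite_distinct_list assms by blast
  have "v1 = v2" if "v1 \<in> V" "v2 \<in> V" "rep V E v1 W = rep V E v2 W" for v1 v2
  proof (rule ccontr)
    assume ne: "v1 \<noteq> v2"
    have "v1 \<in> set W" using W(1) that(1) by simp
    then obtain i where i: "i < length W" "W ! i = v1" unfolding in_set_conv_nth by blast
    have "rep V E v1 W ! i = \<infinity>" using i by (simp add: rep_def kappa_def)
    moreover have "rep V E v2 W ! i \<noteq> \<infinity>" using i ne by (simp add: rep_def kappa_def)
    ultimately show False using that by simp
  qed
  then show ?thesis using W unfolding resolving_def by blast
qed

lemma cdim_le: "resolving V E W \<Longrightarrow> cdim V E \<le> length W"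
  unfolding cdim_def by (rule Least_le) blast

lemma cdim_ex: assumes "finite V" shows "\<exists>W. resolving V E W \<and> length W = cdim V E"
proof -
  obtain W where "resolving V E W" using ex_resolving[OF assms] by blast
  then have "\<exists>k W. resolving V E W \<and> length W = k" by blast
  then show ?thesis unfolding cdim_def by (rule LeastI_ex)
qed

locale pend =
  fixes V :: "'a set" and E :: "'a set set" and u x :: 'a
  assumes g: "graph V E" and c: "connected V E" and uV: "u \<in> V" and xV: "x \<notin> V"
begin

abbreviation "V' \<equiv> insert x V"
abbreviation "E' \<equiv> insert {u, x} E"

lemma edge_x: "{a, x} \<in> E' \<Longrightarrow> a = u"
proof -
  assume a: "{a, x} \<in> E'"
  have "{a, x} \<notin> E" using g xV unfolding graph_def by (auto simp: doubleton_eq_iff)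
  then have "{a, x} = {u, x}" using a by auto
  then show ?thesis using uV xV by (auto simp: doubleton_eq_iff)
qed

lemma path_down:
  assumes p: "is_path V' E' v w p" and v: "v \<in> V" and w: "w \<in> V"
  shows "is_path V E v w p"
proof -
  have ne: "p \<noteq> []" and hd: "hd p = v" and la: "last p = w" and d: "distinct p"
    and e: "\<And>i. Suc i < length p \<Longrightarrow> {p ! i, p ! Suc i} \<in> E'" and s: "set p \<subseteq> V'"
    using p unfolding is_path_def by auto
  have xn: "x \<notin> set p"
  proof
    assume "x \<in> set p"
    then obtain i where i: "i < length p" "p ! i = x" unfolding in_set_conv_nth by blast
    have "i \<noteq> 0" using i hd ne v xV by (metis hd_conv_nth)
    moreover have "i \<noteq> length p - 1" using i la ne w xV by (metis last_conv_nth)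
    ultimately have i1: "0 < i" "Suc i < length p" using i by auto
    have "{p ! (i - 1), x} \<in> E'" using e[of "i - 1"] i i1 by simp
    then have a: "p ! (i - 1) = u" by (rule edge_x)
    have "{p ! Suc i, x} \<in> E'" using e[of i] i i1 by (simp add: insert_commute)
    then have b: "p ! Suc i = u" by (rule edge_x)
    have "p ! (i - 1) = p ! Suc i" using a b by simp
    then have "i - 1 = Suc i" using d i1 nth_eq_iff_index_eq[of p "i - 1" "Suc i"] by simp
    then show False by simp
  qed
  have "{p ! i, p ! Suc i} \<in> E" if "Suc i < length p" for i
  proof -
    have "p ! i \<noteq> x" "p ! Suc i \<noteq> x" using xn that by (auto dest: nth_mem)
    then have "{p ! i, p ! Suc i} \<noteq> {u, x}" by (auto simp: doubleton_eq_iff)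
    then show ?thesis using e[OF that] by auto
  qed
  then show ?thesis using ne hd la d s xn unfolding is_path_def by auto
qed

lemma path_up: "is_path V E v w p \<Longrightarrow> is_path V' E' v w p"
  unfolding is_path_def by auto

lemma kappa_same:
  assumes "v \<in> V" "w \<in> V" shows "kappa V' E' v w = kappa V E v w"
proof -
  have pe: "is_path V' E' v w p = is_path V E v w p" for p
    using path_down[OF _ assms] path_up by blast
  show ?thesis by (simp add: int_disjoint_paths_def kappa_def pe)
qed

lemma last_u:
  assumes p: "is_path V' E' v x p" and v: "v \<in> V"
  shows "2 \<le> length p \<and> p ! (length p - 2) = u"
proof -
  have ne: "p \<noteq> []" and hd: "hd p = v" and la: "last p = x"
    and e: "\<And>i. Suc i < length p \<Longrightarrow> {p ! i, p ! Suc i} \<in> E'"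
    using p unfolding is_path_def by auto
  have "length p \<noteq> 1"
  proof
    assume "length p = 1" then obtain a where "p = [a]" by (cases p) auto
    then show False using hd la v xV by auto
  qed
  moreover have "length p \<noteq> 0" using ne by simp
  ultimately have l: "2 \<le> length p" by arith
  have "p ! (length p - 1) = x" using la ne by (simp add: last_conv_nth)
  moreover have "Suc (length p - 2) = length p - 1" "Suc (length p - 2) < length p" using l by auto
  ultimately have "{p ! (length p - 2), x} \<in> E'" using e[of "length p - 2"] by simp
  then show ?thesis using l edge_x by blast
qed

lemma path_uv:
  assumes p: "is_path V' E' u x p" shows "p = [u, x]"
proof -
  have l: "2 \<le> length p" and pu: "p ! (length p - 2) = u" using last_u[OF p uV] by auto
  have d: "distinct p" and hd: "hd p = u" and la: "last p = x" and ne: "p \<noteq> []"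
    using p unfolding is_path_def by auto
  have "p ! 0 = u" using hd ne by (simp add: hd_conv_nth)
  then have eq: "p ! (length p - 2) = p ! 0" using pu by simp
  have lt: "length p - 2 < length p" "0 < length p" using l by auto
  from nth_eq_iff_index_eq[OF d lt] eq have "length p - 2 = 0" by simp
  then have "length p = 2" using l by simp
  then obtain a b where "p = [a, b]"
    by (cases p; cases "tl p"; auto)
  then show ?thesis using hd la by simp
qed

lemma kappa_x:
  assumes v: "v \<in> V" shows "kappa V' E' v x = 1"
proof -
  have vx: "v \<noteq> x" using v xV by auto
  have sub: "\<forall>p\<in>P. \<forall>q\<in>P. p = q" if P: "int_disjoint_paths V' E' v x P" for P
  proof (intro ballI, rule ccontr)
    fix p q assume pq: "p \<in> P" "q \<in> P" "p \<noteq> q"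
    have pp: "is_path V' E' v x p" "is_path V' E' v x q" using P pq(1,2) unfolding int_disjoint_paths_def by blast+
    have "u \<in> set p" using last_u[OF pp(1) v] nth_mem[of "length p - 2" p] by auto
    moreover have "u \<in> set q" using last_u[OF pp(2) v] nth_mem[of "length q - 2" q] by auto
    moreover have "set p \<inter> set q \<subseteq> {v, x}" using P pq unfolding int_disjoint_paths_def by blast
    ultimately have "u \<in> {v, x}" by blast
    then have "u = v" using uV xV by auto
    then have "p = [u, x]" "q = [u, x]" using path_uv pp by auto
    then show False using pq by simp
  qed
  have "{card P | P. int_disjoint_paths V' E' v x P} = {0, 1}"
  proof (intro equalityI subsetI)
    fix n assume "n \<in> {card P | P. int_disjoint_paths V' E' v x P}"
    then obtain P where P: "n = card P" "int_disjoint_paths V' E' v x P" by auto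
    show "n \<in> {0, 1}"
    proof (cases "P = {}")
      case False
      then obtain p where "p \<in> P" by auto
      then have "P = {p}" using sub[OF P(2)] by auto
      then show ?thesis using P by simp
    qed (use P in simp)
  next
    fix n assume n: "n \<in> {0::nat, 1}"
    obtain p where p: "is_path V E v u p" using c v uV unfolding connected_def by blast
    have pe: "is_path V' E' v x (p @ [x])"
    proof -
      have ne: "p \<noteq> []" and hd: "hd p = v" and la: "last p = u" and d: "distinct p"
        and e: "\<And>i. Suc i < length p \<Longrightarrow> {p ! i, p ! Suc i} \<in> E" and s: "set p \<subseteq> V"
        using p unfolding is_path_def by auto
      have "{(p @ [x]) ! i, (p @ [x]) ! Suc i} \<in> E'" if "Suc i < length (p @ [x])" for i
      proof (cases "Suc i < length p")
        case True then show ?thesis using e by (simp add: nth_append)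
      next
        case False
        then have "Suc i = length p" using that by simp
        moreover have "p ! i = u" using la ne \<open>Suc i = length p\<close>
          by (metis diff_Suc_1 last_conv_nth)
        ultimately show ?thesis by (simp add: nth_append)
      qed
      then show ?thesis using ne hd d s xV unfolding is_path_def by auto
    qed
    have "int_disjoint_paths V' E' v x {}" unfolding int_disjoint_paths_def by simp
    moreover have "int_disjoint_paths V' E' v x {p @ [x]}" using pe unfolding int_disjoint_paths_def by simp
    ultimately have "card ({}::'a list set) \<in> {card P | P. int_disjoint_paths V' E' v x P}"
      "card {p @ [x]} \<in> {card P | P. int_disjoint_paths V' E' v x P}" by blast+
    then show "n \<in> {card P | P. int_disjoint_paths V' E' v x P}" using n by auto
  qed
  then show ?thesis unfolding kappa_def using vx by (simp add: one_enat_def)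
qed

lemma kappa_x2: "v \<in> V \<Longrightarrow> kappa V' E' x v = 1"
  using kappa_x kappa_sym[of V' E' x v] by simp

lemma rep_same: "set W \<subseteq> V \<Longrightarrow> v \<in> V \<Longrightarrow> rep V' E' v W = rep V E v W"
  unfolding rep_def using kappa_same by (auto intro: map_cong)

lemma rep_xx: "set W \<subseteq> V \<Longrightarrow> rep V' E' x W = replicate (length W) 1"
proof -
  assume "set W \<subseteq> V"
  then have "map (kappa V' E' x) W = map (\<lambda>_. 1) W" using kappa_x2 by (auto intro: map_cong)
  then show ?thesis unfolding rep_def by (simp add: map_replicate_const)
qed

lemma resA:
  assumes r: "resolving V' E' W" and xw: "x \<in> set W"
  shows "resolving V E (removeAll x W)"
proof -
  have s: "set (removeAll x W) \<subseteq> V" using r unfolding resolving_def by auto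
  have "v1 = v2" if v: "v1 \<in> V" "v2 \<in> V" and eq: "rep V E v1 (removeAll x W) = rep V E v2 (removeAll x W)" for v1 v2
  proof -
    have "\<forall>w\<in>set W. kappa V' E' v1 w = kappa V' E' v2 w"
    proof
      fix w assume w: "w \<in> set W"
      show "kappa V' E' v1 w = kappa V' E' v2 w"
      proof (cases "w = x")
        case True then show ?thesis using kappa_x v by simp
      next
        case False
        then have "w \<in> V" "w \<in> set (removeAll x W)" using w r unfolding resolving_def by auto
        then show ?thesis using eq kappa_same v unfolding rep_def by (simp add: map_eq_conv)
      qed
    qed
    then have "rep V' E' v1 W = rep V' E' v2 W" unfolding rep_def by (simp add: map_eq_conv)
    then show ?thesis using r v unfolding resolving_def by auto
  qed
  moreover have "distinct (removeAll x W)" using r distinct_removeAll unfolding resolving_def by auto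
  ultimately show ?thesis using s unfolding resolving_def by auto
qed

lemma resB:
  assumes r: "resolving V' E' W" and xw: "x \<notin> set W"
  shows "resolving V E W"
proof -
  have s: "set W \<subseteq> V" using r xw unfolding resolving_def by auto
  then show ?thesis using r rep_same unfolding resolving_def by auto
qed

lemma resC:
  assumes r: "resolving V E B" shows "resolving V' E' (B @ [x])"
proof -
  have s: "set B \<subseteq> V" "distinct B" using r unfolding resolving_def by auto
  have xb: "x \<notin> set B" using s xV by auto
  have R: "rep V' E' v (B @ [x]) = rep V E v B @ [1]" if "v \<in> V" for v
    using rep_same[OF s(1) that] kappa_x[OF that] unfolding rep_def by simp
  have Rx: "rep V' E' x (B @ [x]) = rep V' E' x B @ [\<infinity>]" unfolding rep_def kappa_def by simp
  have "v1 = v2" if v: "v1 \<in> V'" "v2 \<in> V'" and eq: "rep V' E' v1 (B @ [x]) = rep V' E' v2 (B @ [x])" for v1 v2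
  proof -
    consider "v1 = x" "v2 = x" | "v1 = x" "v2 \<in> V" | "v1 \<in> V" "v2 = x" | "v1 \<in> V" "v2 \<in> V" using v by auto
    then show ?thesis
    proof cases
      case 2 then show ?thesis using eq R Rx by (simp add: one_enat_def)
    next
      case 3 then show ?thesis using eq R Rx by (simp add: one_enat_def)
    next
      case 4 then show ?thesis using eq R r unfolding resolving_def by auto
    qed simp
  qed
  then show ?thesis using s xb unfolding resolving_def by auto
qed

lemma resD:
  assumes r: "resolving V E B" and n: "\<forall>v\<in>V. rep V E v B \<noteq> replicate (length B) 1"
  shows "resolving V' E' B"
proof -
  have s: "set B \<subseteq> V" "distinct B" using r unfolding resolving_def by auto
  have "v1 = v2" if v: "v1 \<in> V'" "v2 \<in> V'" and eq: "rep V' E' v1 B = rep V' E' v2 B" for v1 v2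
  proof -
    consider "v1 = x" "v2 = x" | "v1 = x" "v2 \<in> V" | "v1 \<in> V" "v2 = x" | "v1 \<in> V" "v2 \<in> V" using v by auto
    then show ?thesis
    proof cases
      case 2
      then have "rep V E v2 B = replicate (length B) 1" using eq rep_xx[OF s(1)] rep_same[OF s(1) 2(2)] by simp
      then show ?thesis using bspec[OF n 2(2)] by simp
    next
      case 3
      then have "rep V E v1 B = replicate (length B) 1" using eq rep_xx[OF s(1)] rep_same[OF s(1) 3(1)] by simp
      then show ?thesis using bspec[OF n 3(1)] by simp
    next
      case 4 then show ?thesis using eq rep_same[OF s(1) 4(1)] rep_same[OF s(1) 4(2)] r unfolding resolving_def by simp
    qed simp
  qed
  then show ?thesis using s unfolding resolving_def by auto
qed

lemma main:
  "(forces_all_ones V E \<longrightarrow> cdim V' E' = cdim V E + 1) \<and>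
   (\<not> forces_all_ones V E \<longrightarrow> cdim V' E' = cdim V E)"
proof -
  have fV: "finite V" using g unfolding graph_def by auto
  obtain B0 where B0: "resolving V E B0" "length B0 = cdim V E" using cdim_ex[OF fV] by blast
  have up: "cdim V' E' \<le> cdim V E + 1" using cdim_le[OF resC[OF B0(1)]] B0 by simp
  obtain W where W: "resolving V' E' W" "length W = cdim V' E'" using cdim_ex[of V'] fV by auto
  have A: "cdim V E + 1 \<le> cdim V' E'" if "x \<in> set W"
    using cdim_le[OF resA[OF W(1) that]] length_removeAll_less[OF that] W(2) by simp
  have lo: "cdim V E \<le> cdim V' E'"
    using A cdim_le[OF resB[OF W(1)]] W(2) by fastforce
  show ?thesis
  proof (intro conjI impI)
    assume f: "forces_all_ones V E"
    have "cdim V E + 1 \<le> cdim V' E'"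
    proof (cases "x \<in> set W")
      case False
      show ?thesis
      proof (rule ccontr)
        assume "\<not> ?thesis"
        then have "length W = cdim V E" using lo W(2) by simp
        then have "basis V E W" using resB[OF W(1) False] unfolding basis_def by simp
        then obtain v where v: "v \<in> V" "rep V E v W = replicate (length W) 1"
          using f unfolding forces_all_ones_def by blast
        have s: "set W \<subseteq> V" using resB[OF W(1) False] unfolding resolving_def by simp
        have "rep V' E' v W = rep V' E' x W" using rep_same[OF s v(1)] rep_xx[OF s] v by simp
        then have "v = x" using W(1) v(1) unfolding resolving_def by simp
        then show False using v xV by simp
      qed
    qed (rule A)
    then show "cdim V' E' = cdim V E + 1" using up by simp
  next
    assume "\<not> forces_all_ones V E"
    then obtain B where "basis V E B" "\<forall>v\<in>V. rep V E v B \<noteq> replicate (length B) 1"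
      unfolding forces_all_ones_def by blast
    then have "cdim V' E' \<le> cdim V E" using cdim_le[OF resD[of B]] unfolding basis_def by simp
    then show "cdim V' E' = cdim V E" using lo by simp
  qed
qed

end

theorem mainTheorem12:
  fixes V :: "'a set" and E :: "'a set set" and u x :: 'a
  assumes "graph V E" and "connected V E" and "u \<in> V" and "x \<notin> V"
  shows "(forces_all_ones V E \<longrightarrow>
            cdim (insert x V) (insert {u, x} E) = cdim V E + 1) \<and>
         (\<not> forces_all_ones V E \<longrightarrow>
            cdim (insert x V) (insert {u, x} E) = cdim V E)"
proof -
  interpret pend V E u x using assms by unfold_locales
  show ?thesis by (rule main)
qed

end
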